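(* Let $\Delta\subseteq\{0,1\}^N$, $g:\Delta\to\{0,1\}$ a partial Boolean function, and $\delta\in(0,1/2)$. Let $V_1=g^{-1}(1)$ and $V_0=g^{-1}(0)$ (assumed nonempty). Suppose that for some number $K>0$ there is a bipartite graph $H=(V_1\cup V_0,E)$ such that: (i) for every edge $(x,y)\in E$ with $x\in V_1$, $y\in V_0$, there is a sensitive block $B$ of $g$ on $x$ with $y=x^B$; (ii) every $x\in V_1$ has degree $\deg(x)\ge 2K$ in $H$, and the sensitive blocks $B_{x,1},\dots,B_{x,\deg(x)}$ on $x$ corresponding to the edges incident to $x$ are pairwise disjoint; (iii) every $y\in V_0$ has degree at most $d=\left(\frac{1}{2\delta}-1\right)K\frac{|V_1|}{|V_0|}$ in $H$. Then $C_\delta(g)\ge K$.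
   Context: For $x\in\{0,1\}^N$ and $B\subseteq\{1,\dots,N\}$, $x^B$ denotes $x$ with every bit indexed by $B$ flipped. A sensitive block of $g$ on $x\in\Delta$ is a set $B$ such that $x^B\in\Delta$ and $g(x^B)\ne g(x)$. Canonical distribution $\mathcal{D}_g$ on $\Delta$: with probability $1/2$ a uniform element of $g^{-1}(1)$, with probability $1/2$ a uniform element of $g^{-1}(0)$. A certificate of $f:\Delta\to\{0,1\}$ on $x\in\Delta$ is a set $C\subseteq\{1,\dots,N\}$ such that every $y\in\Delta$ with $y|_C=x|_C$ has $f(y)=f(x)$; $C(f)=\max_{x\in\Delta}\min\{|C|: C\text{ certificate of } f \text{ on }x\}$. The $\delta$-approximate certificate complexity is $C_\delta(g)=\min\{C(f): f:\Delta\to\{0,1\},\ \Pr_{x\sim\mathcal{D}_g}[f(x)\ne g(x)]\le\delta\}$. *)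

theory Defs
  imports Complex_Main
begin

text \<open>A point x of {0,1}^N is encoded as the set of indices in {1..N} where x has a 1.
  Partial Boolean functions are functions nat set => bool considered on the domain Delta
  (True = 1, False = 0).\<close>

definition cube :: "nat \<Rightarrow> nat set set" where
  "cube N = {x. x \<subseteq> {1..N}}"

definition flip :: "nat set \<Rightarrow> nat set \<Rightarrow> nat set" where
  "flip x B = (x - B) \<union> (B - x)"

definition sensitive_block ::
  "nat \<Rightarrow> nat set set \<Rightarrow> (nat set \<Rightarrow> bool) \<Rightarrow> nat set \<Rightarrow> nat set \<Rightarrow> bool" where
  "sensitive_block N Delta g x B \<longleftrightarrow>
     B \<subseteq> {1..N} \<and> flip x B \<in> Delta \<and> g (flip x B) \<noteq> g x"

definition is_certificate ::
  "nat \<Rightarrow> nat set set \<Rightarrow> (nat set \<Rightarrow> bool) \<Rightarrow> nat set \<Rightarrow> nat set \<Rightarrow> bool" where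
  "is_certificate N Delta f x C \<longleftrightarrow>
     C \<subseteq> {1..N} \<and> (\<forall>y\<in>Delta. (\<forall>i\<in>C. (i \<in> y) = (i \<in> x)) \<longrightarrow> f y = f x)"

definition cert_complexity :: "nat \<Rightarrow> nat set set \<Rightarrow> (nat set \<Rightarrow> bool) \<Rightarrow> nat" where
  "cert_complexity N Delta f =
     Max ((\<lambda>x. Min {card C | C. is_certificate N Delta f x C}) ` Delta)"

text \<open>Probability, under the canonical distribution D_g, that f disagrees with g.\<close>
definition canon_error ::
  "nat set set \<Rightarrow> (nat set \<Rightarrow> bool) \<Rightarrow> (nat set \<Rightarrow> bool) \<Rightarrow> real" where
  "canon_error Delta g f =
     (1/2) * real (card {x\<in>Delta. g x \<and> f x \<noteq> g x}) / real (card {x\<in>Delta. g x})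
   + (1/2) * real (card {x\<in>Delta. \<not> g x \<and> f x \<noteq> g x}) / real (card {x\<in>Delta. \<not> g x})"

definition approx_cert_complexity ::
  "nat \<Rightarrow> nat set set \<Rightarrow> (nat set \<Rightarrow> bool) \<Rightarrow> real \<Rightarrow> nat" where
  "approx_cert_complexity N Delta g \<delta> =
     Min {cert_complexity N Delta f | f. canon_error Delta g f \<le> \<delta>}"

end

theory Submission
  imports Defs
begin

lemma finite_Delta: "Delta \<subseteq> cube N \<Longrightarrow> finite Delta"
  unfolding cube_def by (rule finite_subset[of _ "Pow {1..N}"]) auto

lemma full_cert: "Delta \<subseteq> cube N \<Longrightarrow> x \<in> Delta \<Longrightarrow> is_certificate N Delta f x {1..N}"
  unfolding is_certificate_def
proof (intro conjI ballI impI)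
  fix y assume a: "Delta \<subseteq> cube N" "x \<in> Delta" "y \<in> Delta" "\<forall>i\<in>{1..N}. (i \<in> y) = (i \<in> x)"
  have "x \<subseteq> {1..N}" "y \<subseteq> {1..N}" using a unfolding cube_def by auto
  then have "y = x" using a(4) by blast
  then show "f y = f x" by simp
qed auto

lemma cert_set_fin: "finite {card C | C. is_certificate N Delta f x C}"
proof -
  have "{card C | C. is_certificate N Delta f x C} \<subseteq> card ` Pow {1..N}"
    unfolding is_certificate_def by auto
  then show ?thesis by (rule finite_subset) auto
qed

lemma cert_exists:
  assumes "Delta \<subseteq> cube N" "x \<in> Delta"
  shows "\<exists>C. is_certificate N Delta f x C \<and> card C \<le> cert_complexity N Delta f"
proof -
  let ?S = "{card C | C. is_certificate N Delta f x C}"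
  have ne: "?S \<noteq> {}" using full_cert[OF assms] by blast
  have "Min ?S \<in> ?S" using Min_in[OF cert_set_fin ne] .
  then obtain C where C: "is_certificate N Delta f x C" "card C = Min ?S" by auto
  have "Min ?S \<le> cert_complexity N Delta f"
    unfolding cert_complexity_def
    using finite_Delta[OF assms(1)] assms(2) by (intro Max_ge) auto
  then show ?thesis using C by auto
qed

lemma cc_le_N:
  assumes "Delta \<subseteq> cube N" "Delta \<noteq> {}"
  shows "cert_complexity N Delta f \<le> N"
  unfolding cert_complexity_def
proof (subst Max_le_iff)
  show "finite ((\<lambda>x. Min {card C |C. is_certificate N Delta f x C}) ` Delta)"
    using finite_Delta[OF assms(1)] by auto
  show "(\<lambda>x. Min {card C |C. is_certificate N Delta f x C}) ` Delta \<noteq> {}" using assms(2) by auto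
  show "\<forall>a\<in>(\<lambda>x. Min {card C |C. is_certificate N Delta f x C}) ` Delta. a \<le> N"
  proof
    fix a assume "a \<in> (\<lambda>x. Min {card C |C. is_certificate N Delta f x C}) ` Delta"
    then obtain x where x: "x \<in> Delta" "a = Min {card C |C. is_certificate N Delta f x C}" by auto
    have "card {1..N} \<in> {card C |C. is_certificate N Delta f x C}"
      using full_cert[OF assms(1) x(1)] by blast
    then have "a \<le> card {1..N}" using x(2) cert_set_fin by (simp add: Min_le)
    then show "a \<le> N" by simp
  qed
qed

lemma blocks_count:
  assumes "finite C"
    and "\<And>y y'. y \<in> Y \<Longrightarrow> y' \<in> Y \<Longrightarrow> y \<noteq> y' \<Longrightarrow> b y \<inter> b y' = {}"
  shows "card {y\<in>Y. b y \<inter> C \<noteq> {}} \<le> card C"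
proof -
  let ?h = "\<lambda>y. SOME i. i \<in> b y \<inter> C"
  have h: "?h y \<in> b y \<inter> C" if "b y \<inter> C \<noteq> {}" for y
    using that by (metis (no_types, lifting) ex_in_conv someI_ex)
  have "inj_on ?h {y\<in>Y. b y \<inter> C \<noteq> {}}"
  proof (rule inj_onI)
    fix y y' assume a: "y \<in> {y\<in>Y. b y \<inter> C \<noteq> {}}" "y' \<in> {y\<in>Y. b y \<inter> C \<noteq> {}}" "?h y = ?h y'"
    show "y = y'"
    proof (rule ccontr)
      assume "y \<noteq> y'"
      then have "b y \<inter> b y' = {}" using assms(2) a by auto
      moreover have "?h y \<in> b y" using h a(1) by blast
      moreover have "?h y' \<in> b y'" using h a(2) by blast
      ultimately show False using a(3) by (metis disjoint_iff)
    qed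
  qed
  moreover have "?h ` {y\<in>Y. b y \<inter> C \<noteq> {}} \<subseteq> C" using h by auto
  ultimately show ?thesis using assms(1) card_inj_on_le by blast
qed

lemma count_swap:
  assumes "finite A" "finite B"
  shows "(\<Sum>x\<in>A. card {y\<in>B. R x y}) = (\<Sum>y\<in>B. card {x\<in>A. R x y})"
proof -
  have cs: "card {z\<in>Z. P z} = (\<Sum>z\<in>Z. if P z then 1 else (0::nat))" if "finite Z" for Z P
    using sum.inter_filter[OF that, of "\<lambda>_. (1::nat)" P] by simp
  have "(\<Sum>x\<in>A. card {y\<in>B. R x y}) = (\<Sum>x\<in>A. \<Sum>y\<in>B. if R x y then 1 else (0::nat))"
    using assms by (simp add: cs)
  also have "\<dots> = (\<Sum>y\<in>B. \<Sum>x\<in>A. if R x y then 1 else (0::nat))" by (rule sum.swap)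
  also have "\<dots> = (\<Sum>y\<in>B. card {x\<in>A. R x y})"
    using assms by (simp add: cs)
  finally show ?thesis .
qed

lemma arith_fin:
  fixes \<delta> K a b s t :: real
  assumes "0 < \<delta>" "\<delta> < 1/2" "K > 0" "a > 0" "b > 0" "0 \<le> s" "s \<le> a" "t \<ge> 0"
    and h: "K * s \<le> t * ((1 / (2 * \<delta>) - 1) * K * a / b)"
  shows "\<delta> < (1/2) * (a - s) / a + (1/2) * t / b"
proof -
  define c where "c = 2*\<delta>/(1-2*\<delta>)"
  have e: "1 / (2 * \<delta>) - 1 = (1-2*\<delta>)/(2*\<delta>)" using assms by (simp add: field_simps)
  have "s \<le> t * ((1-2*\<delta>)/(2*\<delta>)) * a / b" using h assms(3) unfolding e
    by (smt (verit, ccfv_SIG) mult.commute mult.left_commute mult_le_cancel_left_pos times_divide_eq_right)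
  then have "s * c / a \<le> t / b" using assms unfolding c_def by (simp add: field_simps)
  then have 1: "(a - s) / a + t / b \<ge> 1 - (s/a) * (1 - c)" using assms by (simp add: field_simps)
  have c2: "c > 2*\<delta>" using assms unfolding c_def by (simp add: field_simps)
  have sa: "s/a \<le> 1" "s/a \<ge> 0" using assms by auto
  have "1 - (s/a) * (1 - c) > 2*\<delta>"
  proof (cases "c \<ge> 1")
    case True then have "(s/a) * (1 - c) \<le> 0" using sa mult_nonneg_nonpos[of "s/a" "1-c"] by linarith
    then show ?thesis using assms by linarith
  next
    case False then have "(s/a) * (1 - c) \<le> 1 - c" using sa mult_left_le_one_le[of "1-c" "s/a"] by linarith
    then show ?thesis using c2 by linarith
  qed
  then show ?thesis using 1 by simp
qed
theorem theorem5p10: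
  fixes N :: nat and Delta :: "nat set set" and g :: "nat set \<Rightarrow> bool"
    and \<delta> K :: real and E :: "(nat set \<times> nat set) set"
    and blk :: "nat set \<Rightarrow> nat set \<Rightarrow> nat set"
  defines "V1 \<equiv> {x\<in>Delta. g x}" and "V0 \<equiv> {x\<in>Delta. \<not> g x}"
  assumes Delta_sub: "Delta \<subseteq> cube N"
    and delta: "0 < \<delta>" "\<delta> < 1/2"
    and V1_ne: "V1 \<noteq> {}" and V0_ne: "V0 \<noteq> {}"
    and K_pos: "K > 0"
    and E_bip: "E \<subseteq> V1 \<times> V0"
    and edge_block: "\<And>x y. (x, y) \<in> E \<Longrightarrow>
                        sensitive_block N Delta g x (blk x y) \<and> y = flip x (blk x y)"
    and deg1: "\<And>x. x \<in> V1 \<Longrightarrow> real (card {y. (x, y) \<in> E}) \<ge> 2 * K"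
    and disj: "\<And>x y y'. (x, y) \<in> E \<Longrightarrow> (x, y') \<in> E \<Longrightarrow> y \<noteq> y' \<Longrightarrow>
                        blk x y \<inter> blk x y' = {}"
    and deg0: "\<And>y. y \<in> V0 \<Longrightarrow> real (card {x. (x, y) \<in> E})
                  \<le> (1 / (2 * \<delta>) - 1) * K * real (card V1) / real (card V0)"
  shows "real (approx_cert_complexity N Delta g \<delta>) \<ge> K"
proof -
  have finD: "finite Delta" using finite_Delta[OF Delta_sub] .
  have finV1: "finite V1" and finV0: "finite V0" using finD unfolding V1_def V0_def by auto
  have DeltaNe: "Delta \<noteq> {}" using V1_ne unfolding V1_def by auto
  define d where "d = (1 / (2 * \<delta>) - 1) * K * real (card V1) / real (card V0)"
  have key: "K \<le> real (cert_complexity N Delta f)" if err: "canon_error Delta g f \<le> \<delta>" for f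
  proof (rule ccontr)
    define cc where "cc = cert_complexity N Delta f"
    assume "\<not> K \<le> real (cert_complexity N Delta f)"
    then have lt: "real cc < K" unfolding cc_def by simp
    have "\<forall>x\<in>Delta. \<exists>C. is_certificate N Delta f x C \<and> card C \<le> cc"
      using cert_exists[OF Delta_sub] unfolding cc_def by blast
    then obtain C where C: "\<And>x. x \<in> Delta \<Longrightarrow> is_certificate N Delta f x (C x) \<and> card (C x) \<le> cc"
      by metis
    define S1 where "S1 = {x\<in>V1. f x}"
    define F0 where "F0 = {y\<in>V0. f y}"
    define R where "R x y = ((x,y)\<in>E \<and> blk x y \<inter> C x = {})" for x y
    have finS1: "finite S1" and finF0: "finite F0" using finV1 finV0 unfolding S1_def F0_def by auto
    have A: "K \<le> real (card {y\<in>F0. R x y})" if xS: "x \<in> S1" for x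
    proof -
      define Nx where "Nx = {y. (x,y)\<in>E}"
      have xD: "x \<in> Delta" "f x" using xS unfolding S1_def V1_def by auto
      have finNx: "finite Nx" using E_bip finV0 unfolding Nx_def
        by (rule_tac finite_subset[of _ V0]) auto
      have finC: "finite (C x)" using C[OF xD(1)] unfolding is_certificate_def
        by (meson finite_atLeastAtMost finite_subset)
      have b1: "card {y\<in>Nx. blk x y \<inter> C x \<noteq> {}} \<le> card (C x)"
        by (rule blocks_count[OF finC]) (use disj in \<open>auto simp: Nx_def\<close>)
      have eq: "{y\<in>F0. R x y} = {y\<in>Nx. blk x y \<inter> C x = {}}"
      proof
        show "{y\<in>F0. R x y} \<subseteq> {y\<in>Nx. blk x y \<inter> C x = {}}" unfolding R_def Nx_def by auto
        show "{y\<in>Nx. blk x y \<inter> C x = {}} \<subseteq> {y\<in>F0. R x y}"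
        proof
          fix y assume y: "y \<in> {y\<in>Nx. blk x y \<inter> C x = {}}"
          then have e: "(x,y) \<in> E" "blk x y \<inter> C x = {}" unfolding Nx_def by auto
          have yV0: "y \<in> V0" using e E_bip by auto
          have yflip: "y = flip x (blk x y)" using edge_block[OF e(1)] by auto
          have agree: "\<forall>i\<in>C x. (i \<in> y) = (i \<in> x)"
            using e(2) yflip unfolding flip_def by auto
          have "f y = f x" using C[OF xD(1)] yV0 agree unfolding is_certificate_def V0_def by auto
          then show "y \<in> {y\<in>F0. R x y}" using yV0 xD e unfolding F0_def R_def by auto
        qed
      qed
      have "card Nx = card {y\<in>Nx. blk x y \<inter> C x = {}} + card {y\<in>Nx. blk x y \<inter> C x \<noteq> {}}"
      proof -
        have "Nx = {y\<in>Nx. blk x y \<inter> C x = {}} \<union> {y\<in>Nx. blk x y \<inter> C x \<noteq> {}}" by auto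
        then have "card Nx = card ({y\<in>Nx. blk x y \<inter> C x = {}} \<union> {y\<in>Nx. blk x y \<inter> C x \<noteq> {}})" by simp
        also have "\<dots> = card {y\<in>Nx. blk x y \<inter> C x = {}} + card {y\<in>Nx. blk x y \<inter> C x \<noteq> {}}"
          by (rule card_Un_disjoint) (use finNx in auto)
        finally show ?thesis .
      qed
      moreover have "real (card Nx) \<ge> 2 * K" using deg1 xS unfolding Nx_def S1_def by auto
      moreover have "real (card (C x)) \<le> real cc" using C[OF xD(1)] by auto
      ultimately show ?thesis using b1 lt eq
        by (smt (verit, ccfv_SIG) of_nat_add of_nat_mono)
    qed
    have B: "real (card {x\<in>S1. R x y}) \<le> d" if yF: "y \<in> F0" for y
    proof -
      have "{x\<in>S1. R x y} \<subseteq> {x. (x,y)\<in>E}" unfolding R_def by auto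
      moreover have "finite {x. (x,y)\<in>E}" using E_bip finV1
        by (rule_tac finite_subset[of _ V1]) auto
      ultimately have "card {x\<in>S1. R x y} \<le> card {x. (x,y)\<in>E}" by (rule card_mono[rotated])
      moreover have "y \<in> V0" using yF unfolding F0_def by auto
      ultimately show ?thesis unfolding d_def
        using deg0[of y] by (meson of_nat_le_iff order_trans)
    qed
    have "K * real (card S1) = (\<Sum>x\<in>S1. K)" by simp
    also have "\<dots> \<le> (\<Sum>x\<in>S1. real (card {y\<in>F0. R x y}))" by (rule sum_mono) (use A in auto)
    also have "\<dots> = real (\<Sum>x\<in>S1. card {y\<in>F0. R x y})" by simp
    also have "\<dots> = real (\<Sum>y\<in>F0. card {x\<in>S1. R x y})" using count_swap[OF finS1 finF0] by simp
    also have "\<dots> = (\<Sum>y\<in>F0. real (card {x\<in>S1. R x y}))" by simp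
    also have "\<dots> \<le> (\<Sum>y\<in>F0. d)" by (rule sum_mono) (use B in auto)
    also have "\<dots> = real (card F0) * d" by simp
    finally have main: "K * real (card S1) \<le> real (card F0) * d" .
    have e1: "{x\<in>Delta. g x \<and> f x \<noteq> g x} = V1 - S1" unfolding V1_def S1_def by auto
    have e0: "{x\<in>Delta. \<not> g x \<and> f x \<noteq> g x} = F0" unfolding V0_def F0_def by auto
    have S1sub: "S1 \<subseteq> V1" unfolding S1_def by auto
    have cS: "real (card (V1 - S1)) = real (card V1) - real (card S1)"
      using card_Diff_subset[OF finite_subset[OF S1sub finV1] S1sub] card_mono[OF finV1 S1sub]
      by simp
    have ce: "canon_error Delta g f = (1/2) * (real (card V1) - real (card S1)) / real (card V1)
        + (1/2) * real (card F0) / real (card V0)"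
      unfolding canon_error_def e1 e0 cS by (simp add: V1_def V0_def)
    have "\<delta> < (1/2) * (real (card V1) - real (card S1)) / real (card V1)
        + (1/2) * real (card F0) / real (card V0)"
    proof (rule arith_fin)
      show "0 < \<delta>" "\<delta> < 1/2" "K > 0" using delta K_pos by auto
      show "0 < real (card V1)" using V1_ne finV1 by (simp add: card_gt_0_iff)
      show "0 < real (card V0)" using V0_ne finV0 by (simp add: card_gt_0_iff)
      show "0 \<le> real (card S1)" "0 \<le> real (card F0)" by auto
      show "real (card S1) \<le> real (card V1)" using card_mono[OF finV1 S1sub] by simp
      show "K * real (card S1) \<le> real (card F0) * ((1 / (2 * \<delta>) - 1) * K * real (card V1) / real (card V0))"
        using main unfolding d_def .
    qed
    then show False using err ce by linarith
  qed
  define P where "P = {cert_complexity N Delta f | f. canon_error Delta g f \<le> \<delta>}"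
  have "canon_error Delta g g = 0" unfolding canon_error_def by simp
  then have "cert_complexity N Delta g \<in> P" unfolding P_def using delta by auto
  then have Pne: "P \<noteq> {}" by auto
  have Pfin: "finite P"
  proof (rule finite_subset)
    show "P \<subseteq> {..N}" unfolding P_def using cc_le_N[OF Delta_sub DeltaNe] by auto
  qed auto
  have "Min P \<in> P" using Min_in[OF Pfin Pne] .
  then obtain f where "canon_error Delta g f \<le> \<delta>" "Min P = cert_complexity N Delta f"
    unfolding P_def by auto
  then show ?thesis using key unfolding approx_cert_complexity_def P_def[symmetric] by simp
qed

end
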